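(* Let $\Lambda=[\mu_1,L_1]\cup[\mu_2,L_2]$ with $0<\mu_1<L_1\le\mu_2<L_2$ and $L_1-\mu_1=L_2-\mu_2$, and set $\rho=\frac{L_2+\mu_1}{L_2-\mu_1}$, $R=\frac{\mu_2-L_1}{L_2-\mu_1}$. Let $$m=\left(\frac{\sqrt{\rho^2-R^2}-\sqrt{\rho^2-1}}{\sqrt{1-R^2}}\right)^2,\quad h_0=\frac{1+m}{L_1},\quad h_1=\frac{1+m}{\mu_2},$$ and consider the method $\mathrm{HB}_2(h_0,h_1;m)$ (equivalently, with $h_0$ and $h_1$ swapped). Then for every even $t$ its worst-case rate over $\mathcal{C}_\Lambda$ is $$r_t=\left(\frac{\sqrt{\rho^2-R^2}-\sqrt{\rho^2-1}}{\sqrt{1-R^2}}\right)^{t}\left(1+t\sqrt{\frac{\rho^2-1}{\rho^2-R^2}}\right),$$ and its asymptotic rate factor is $1-\tau=\frac{\sqrt{\rho^2-R^2}-\sqrt{\rho^2-1}}{\sqrt{1-R^2}}$.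
   Context: For a set $\Lambda\subseteq[\mu,L]$ with $0<\mu<L$, $\mathcal{C}_\Lambda$ is the class of all quadratic functions $f:\mathbb{R}^d\to\mathbb{R}$ (any $d\ge1$) of the form $f(x)=\tfrac12(x-x_* )^\top H(x-x_* )+f_*$ with $H$ symmetric and spectrum $\mathrm{Sp}(H)\subseteq\Lambda$. For a cycle length $K\ge1$, momentum $m\in(0,1)$ and step-sizes $h_0,\dots,h_{K-1}$, the cyclical heavy ball method $\mathrm{HB}_K(h_0,\dots,h_{K-1};m)$ started at $x_0$ produces $x_1=x_0-\frac{h_0}{1+m}\nabla f(x_0)$ and, for $t\ge1$, $x_{t+1}=x_t-h_{t\bmod K}\nabla f(x_t)+m(x_t-x_{t-1})$. For a method producing iterates $(x_t)$, its worst-case rate over $\mathcal{C}_\Lambda$ is $r_t=\sup_{f\in\mathcal{C}_\Lambda,\,x_0\neq x_*}\|x_t-x_*\|/\|x_0-x_*\|$ and its asymptotic rate factor is $1-\tau=\limsup_{t\to\infty}r_t^{1/t}$. *)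

theory Defs
  imports "Jordan_Normal_Form.Char_Poly" "HOL-Library.Extended_Real" "HOL-Library.Liminf_Limsup"
begin

definition vnorm :: "real vec \<Rightarrow> real" where
  "vnorm v = sqrt (v \<bullet> v)"

(* Quadratic f(x) = 1/2 (x-xs)^T H (x-xs) + fs on R^d with H symmetric and Sp(H) \<subseteq> Lam.
   It is described by its data (d, H, xs, fs). *)
definition in_class :: "real set \<Rightarrow> nat \<Rightarrow> real mat \<Rightarrow> real vec \<Rightarrow> bool" where
  "in_class Lam d H xs \<longleftrightarrow> d \<ge> 1 \<and> H \<in> carrier_mat d d \<and> H\<^sup>T = H \<and> xs \<in> carrier_vec d
     \<and> (\<forall>lam. eigenvalue H lam \<longrightarrow> lam \<in> Lam)"

definition quad_fun :: "real mat \<Rightarrow> real vec \<Rightarrow> real \<Rightarrow> real vec \<Rightarrow> real" where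
  "quad_fun H xs fs x = (1/2) * ((x - xs) \<bullet> (H *\<^sub>v (x - xs))) + fs"

(* gradient of quad_fun H xs fs (H symmetric) *)
definition quad_grad :: "real mat \<Rightarrow> real vec \<Rightarrow> real vec \<Rightarrow> real vec" where
  "quad_grad H xs x = H *\<^sub>v (x - xs)"

fun hb :: "real list \<Rightarrow> real \<Rightarrow> (real vec \<Rightarrow> real vec) \<Rightarrow> real vec \<Rightarrow> nat \<Rightarrow> real vec" where
  "hb hs m g x0 0 = x0"
| "hb hs m g x0 (Suc 0) = x0 - (hs ! 0 / (1 + m)) \<cdot>\<^sub>v g x0"
| "hb hs m g x0 (Suc (Suc t)) =
     hb hs m g x0 (Suc t) - (hs ! (Suc t mod length hs)) \<cdot>\<^sub>v g (hb hs m g x0 (Suc t))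
       + m \<cdot>\<^sub>v (hb hs m g x0 (Suc t) - hb hs m g x0 t)"

definition worst_rate :: "real set \<Rightarrow> real list \<Rightarrow> real \<Rightarrow> nat \<Rightarrow> real" where
  "worst_rate Lam hs m t = Sup {vnorm (hb hs m (quad_grad H xs) x0 t - xs) / vnorm (x0 - xs) | d H xs x0.
       in_class Lam d H xs \<and> x0 \<in> carrier_vec d \<and> x0 \<noteq> xs}"

definition asym_rate :: "real set \<Rightarrow> real list \<Rightarrow> real \<Rightarrow> ereal" where
  "asym_rate Lam hs m = limsup (\<lambda>t. ereal (worst_rate Lam hs m t powr (1 / real t)))"

end

theory Submission
  imports Defs "Jordan_Normal_Form.Schur_Decomposition" "Jordan_Normal_Form.Spectral_Radius"
begin


lemma real_conj_vec[simp]: "conjugate (w :: real vec) = w"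
  by (intro eq_vecI, auto simp: conjugate_vec_def)

lemma vCons_smult: "vCons 0 (c \<cdot>\<^sub>v y) = c \<cdot>\<^sub>v vCons (0::real) y"
  by (intro eq_vecI) (auto simp: vec_index_vCons)

lemma real_self_sprod_pos:
  fixes v :: "real vec"
  assumes "v \<in> carrier_vec n" "v \<noteq> 0\<^sub>v n"
  shows "v \<bullet> v > 0"
proof -
  have ge: "v \<bullet> v \<ge> 0" unfolding scalar_prod_def by (auto intro: sum_nonneg)
  { assume "v \<bullet> v = 0"
    hence "\<forall>i\<in>{0..<dim_vec v}. v$i * v$i = 0" unfolding scalar_prod_def
      by (subst sum_nonneg_eq_0_iff[symmetric], auto)
    hence "v = 0\<^sub>v n" using assms(1) by (intro eq_vecI, auto) }
  with ge assms show ?thesis by force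
qed

lemma sym_real_eigenvalue:
  fixes A :: "real mat"
  assumes A: "A \<in> carrier_mat n n" and sym: "A\<^sup>T = A" and n: "n > 0"
  shows "\<exists>e. eigenvalue A e"
proof -
  let ?C = "map_mat complex_of_real A"
  have C: "?C \<in> carrier_mat n n" using A by auto
  from spectrum_non_empty[OF C n] obtain mu where "eigenvalue ?C mu" unfolding spectrum_def by auto
  then obtain v where v: "v \<in> carrier_vec n" "v \<noteq> 0\<^sub>v n" "?C *\<^sub>v v = mu \<cdot>\<^sub>v v"
    unfolding eigenvalue_def eigenvector_def using C by auto
  have symij: "A $$ (i,j) = A $$ (j,i)" if "i < n" "j < n" for i j
    using arg_cong[OF sym, of "\<lambda>M. M $$ (i,j)"] that A by auto
  define s where "s = (\<Sum>i<n. cnj (v$i) * (?C *\<^sub>v v)$i)"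
  define N where "N = (\<Sum>i<n. cnj (v$i) * v$i)"
  have s1: "s = mu * N" unfolding s_def N_def v(3) using v(1)
    by (auto simp: sum_distrib_left intro!: sum.cong)
  have s2: "s = (\<Sum>i<n. \<Sum>j<n. cnj (v$i) * of_real (A$$(i,j)) * v$j)"
    unfolding s_def using v(1) A
    by (auto simp: scalar_prod_def sum_distrib_left lessThan_atLeast0 mult.assoc intro!: sum.cong)
  have "cnj s = (\<Sum>i<n. \<Sum>j<n. v$i * of_real (A$$(i,j)) * cnj (v$j))"
    unfolding s2 by simp
  also have "\<dots> = (\<Sum>j<n. \<Sum>i<n. v$i * of_real (A$$(i,j)) * cnj (v$j))"
    by (rule sum.swap)
  also have "\<dots> = s" unfolding s2
    by (intro sum.cong refl, auto simp: symij mult.commute mult.left_commute)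
  finally have cs: "cnj s = s" .
  have Nr: "N = of_real (\<Sum>i<n. (cmod (v$i))^2)"
    unfolding N_def of_real_sum by (intro sum.cong refl) (simp only: complex_norm_square mult.commute)
  obtain k where k: "k < n" "v$k \<noteq> 0" using v(1,2) by (metis eq_vecI carrier_vecD index_zero_vec(1,2))
  have "(\<Sum>i<n. (cmod (v$i))^2) > 0"
    by (rule sum_pos2[of _ k], use k in auto)
  hence N0: "N \<noteq> 0" unfolding Nr by (metis of_real_eq_0_iff order_less_irrefl)
  have cN: "cnj N = N" unfolding Nr by simp
  from cs[unfolded s1] cN N0 have "cnj mu = mu" by auto
  hence "Im (cnj mu) = Im mu" by simp
  hence "Im mu = 0" by simp
  hence mu: "mu = of_real (Re mu)" by (simp add: complex_eq_iff)
  have "poly (char_poly ?C) mu = 0" using \<open>eigenvalue ?C mu\<close> eigenvalue_root_char_poly[OF C] by auto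
  hence "poly (map_poly of_real (char_poly A)) (of_real (Re mu) :: complex) = 0"
    using of_real_hom.char_poly_hom[OF A] mu by metis
  hence "poly (char_poly A) (Re mu) = 0" by (simp add: of_real_hom.poly_map_poly)
  thus ?thesis using eigenvalue_root_char_poly[OF A] by auto
qed

lemma orthonormal_completion:
  fixes v :: "real vec"
  assumes v: "v \<in> carrier_vec n" and v1: "v \<bullet> v = 1"
  shows "\<exists>ws. length ws = n \<and> set ws \<subseteq> carrier_vec n \<and> ws ! 0 = v \<and>
     (\<forall>i<n. \<forall>j<n. ws!i \<bullet> ws!j = (if i = j then 1 else 0))"
proof -
  have v0: "v \<noteq> 0\<^sub>v n" using v1 v by auto
  interpret cof_vec_space n "TYPE(real)" .
  define b where "b = basis_completion v"
  define ws0 where "ws0 = gram_schmidt n b"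
  from basis_completion[OF v v0, folded b_def]
  have dist_b: "distinct b" and indep: "\<not> lin_dep (set b)" and b: "set b \<subseteq> carrier_vec n"
    and hdb: "hd b = v" and len_b: "length b = n" by auto
  have n: "n > 0" using v0 v by (cases n, auto)
  from hdb len_b n obtain vs where bv: "b = v # vs" by (cases b, auto)
  from gram_schmidt_result[OF b dist_b indep refl, folded ws0_def]
  have ws0: "set ws0 \<subseteq> carrier_vec n" "corthogonal ws0" "length ws0 = n"
    by (auto simp: len_b)
  from gram_schmidt_hd[OF v, of vs, folded bv] have hd0: "hd ws0 = v" unfolding ws0_def .
  have orth: "ws0!i \<bullet> ws0!j = 0 \<longleftrightarrow> i \<noteq> j" if "i < n" "j < n" for i j
    using corthogonalD[OF ws0(2), of i j] that ws0(3) by simp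
  define ws where "ws = map (\<lambda>w. (1 / sqrt (w \<bullet> w)) \<cdot>\<^sub>v w) ws0"
  have wsi: "ws ! i = (1 / sqrt (ws0!i \<bullet> ws0!i)) \<cdot>\<^sub>v ws0!i" if "i < n" for i
    unfolding ws_def using that ws0(3) by auto
  have cari: "ws0 ! i \<in> carrier_vec n" if "i < n" for i using ws0 that by auto
  have pos: "ws0!i \<bullet> ws0!i > 0" if "i < n" for i
  proof -
    have "ws0!i \<bullet> ws0!i \<noteq> 0" using orth[OF that that] by simp
    moreover have "ws0!i \<bullet> ws0!i \<ge> 0" unfolding scalar_prod_def by (auto intro: sum_nonneg)
    ultimately show ?thesis by linarith
  qed
  have "ws0 ! 0 = v" using hd0 ws0(3) n by (cases ws0, auto)
  hence ws_0: "ws ! 0 = v" using wsi[OF n] v1 by simp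
  have "ws!i \<bullet> ws!j = (if i = j then 1 else 0)" if i: "i < n" and j: "j < n" for i j
  proof -
    have "ws!i \<bullet> ws!j = (1 / sqrt (ws0!i \<bullet> ws0!i)) * (1 / sqrt (ws0!j \<bullet> ws0!j)) * (ws0!i \<bullet> ws0!j)"
      unfolding wsi[OF i] wsi[OF j] using cari[OF i] cari[OF j] by simp
    also have "\<dots> = (if i = j then 1 else 0)"
    proof (cases "i = j")
      case True
      have p: "sqrt (ws0!i \<bullet> ws0!i) * sqrt (ws0!i \<bullet> ws0!i) = ws0!i \<bullet> ws0!i"
        using pos[OF i] by simp
      show ?thesis using True pos[OF i] p by (simp add: field_simps)
    next
      case False thus ?thesis using orth[OF i j] by simp
    qed
    finally show ?thesis .
  qed
  moreover have "length ws = n" unfolding ws_def using ws0 by simp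
  moreover have "set ws \<subseteq> carrier_vec n" unfolding ws_def using ws0(1) by auto
  ultimately show ?thesis using ws_0 by blast
qed

definition orthonormal_eigs :: "real mat \<Rightarrow> nat \<Rightarrow> real vec list \<Rightarrow> bool" where
  "orthonormal_eigs A n us \<longleftrightarrow> length us = n \<and> set us \<subseteq> carrier_vec n \<and>
     (\<forall>i<n. \<forall>j<n. us!i \<bullet> us!j = (if i = j then 1 else 0)) \<and>
     (\<forall>i<n. \<exists>e. A *\<^sub>v (us!i) = e \<cdot>\<^sub>v (us!i))"

theorem spectral_real_sym:
  fixes A :: "real mat"
  shows "A \<in> carrier_mat n n \<Longrightarrow> A\<^sup>T = A \<Longrightarrow> \<exists>us. orthonormal_eigs A n us"
proof (induction n arbitrary: A)
  case 0
  show ?case by (rule exI[of _ "[]"], auto simp: orthonormal_eigs_def)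
next
  case (Suc n A)
  note A = Suc.prems(1) and sym = Suc.prems(2)
  have symij: "A $$ (i,j) = A $$ (j,i)" if "i < Suc n" "j < Suc n" for i j
    using arg_cong[OF sym, of "\<lambda>M. M $$ (i,j)"] that A by auto
  from sym_real_eigenvalue[OF A sym] obtain e where "eigenvalue A e" by auto
  from find_eigenvector[OF A this] obtain v0 where
    v0: "v0 \<in> carrier_vec (Suc n)" "v0 \<noteq> 0\<^sub>v (Suc n)" "A *\<^sub>v v0 = e \<cdot>\<^sub>v v0"
    unfolding eigenvector_def using A by auto
  have p0: "v0 \<bullet> v0 > 0" by (rule real_self_sprod_pos[OF v0(1,2)])
  define v where "v = (1 / sqrt (v0 \<bullet> v0)) \<cdot>\<^sub>v v0"
  have v: "v \<in> carrier_vec (Suc n)" unfolding v_def using v0 by auto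
  have v1: "v \<bullet> v = 1" unfolding v_def using v0(1) p0
    by (simp add: field_simps)
  have Av: "A *\<^sub>v v = e \<cdot>\<^sub>v v" unfolding v_def using mult_mat_vec[OF A v0(1)] v0(3)
    by (auto simp: smult_smult_assoc mult.commute)
  from orthonormal_completion[OF v v1] obtain ws where
    ws: "length ws = Suc n" "set ws \<subseteq> carrier_vec (Suc n)" "ws ! 0 = v"
    and on: "\<And>i j. i < Suc n \<Longrightarrow> j < Suc n \<Longrightarrow> ws!i \<bullet> ws!j = (if i = j then 1 else 0)" by blast
  have wsc: "ws ! i \<in> carrier_vec (Suc n)" if "i < Suc n" for i using ws that by auto
  define W where "W = mat_of_cols (Suc n) ws"
  have W: "W \<in> carrier_mat (Suc n) (Suc n)" unfolding W_def using ws by auto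
  have colW: "col W j = ws ! j" if "j < Suc n" for j unfolding W_def using ws that wsc by auto
  have WtW: "W\<^sup>T * W = 1\<^sub>m (Suc n)"
    by (rule eq_matI, insert W, auto simp: colW on)
  have WWt: "W * W\<^sup>T = 1\<^sub>m (Suc n)"
    by (rule mat_mult_left_right_inverse[OF _ W WtW], insert W, auto)
  define A' where "A' = W\<^sup>T * (A * W)"
  have A': "A' \<in> carrier_mat (Suc n) (Suc n)" unfolding A'_def using A W by auto
  have A'ij: "A' $$ (i,j) = ws!i \<bullet> (A *\<^sub>v ws!j)" if "i < Suc n" "j < Suc n" for i j
    unfolding A'_def using that A W by (auto simp: colW mult_mat_vec_def)
  have A'sym: "A' $$ (i,j) = A' $$ (j,i)" if i: "i < Suc n" and j: "j < Suc n" for i j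
  proof -
    have "A' $$ (i,j) = (A\<^sup>T *\<^sub>v ws!i) \<bullet> ws!j"
      unfolding A'ij[OF i j] by (rule transpose_vec_mult_scalar[OF A wsc[OF j] wsc[OF i], symmetric])
    also have "\<dots> = ws!j \<bullet> (A *\<^sub>v ws!i)" unfolding sym
      by (rule comm_scalar_prod[of _ "Suc n"], insert A wsc[OF i] wsc[OF j], auto)
    finally show ?thesis using A'ij[OF j i] by simp
  qed
  have A'0: "A' $$ (i,0) = (if i = 0 then e else 0)" if i: "i < Suc n" for i
    unfolding A'ij[OF i zero_less_Suc] ws(3) Av using on[OF i zero_less_Suc] ws(3) v wsc[OF i] by auto
  have WA': "W * A' = A * W" unfolding A'_def
    by (subst assoc_mult_mat[symmetric, of _ "Suc n" "Suc n" _ "Suc n" _ "Suc n"], insert W A, auto simp: WWt)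
  define A3 where "A3 = mat n n (\<lambda>(i,j). A' $$ (Suc i, Suc j))"
  have A3: "A3 \<in> carrier_mat n n" unfolding A3_def by auto
  have A3sym: "A3\<^sup>T = A3" unfolding A3_def by (rule eq_matI, auto simp: A'sym)
  from Suc.IH[OF A3 A3sym] obtain ys where ys: "orthonormal_eigs A3 n ys" by auto
  have ysc: "ys ! i \<in> carrier_vec n" if "i < n" for i using ys that unfolding orthonormal_eigs_def by auto
  have A'cons: "A' *\<^sub>v vCons 0 y = vCons 0 (A3 *\<^sub>v y)" if y: "y \<in> carrier_vec n" for y
  proof (rule eq_vecI)
    show "dim_vec (A' *\<^sub>v vCons 0 y) = dim_vec (vCons 0 (A3 *\<^sub>v y))" using A' A3 by auto
    fix i assume "i < dim_vec (vCons 0 (A3 *\<^sub>v y))"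
    hence i: "i < Suc n" using A3 by auto
    have "(A' *\<^sub>v vCons 0 y) $ i = (\<Sum>j<Suc n. A' $$ (i,j) * vCons 0 y $ j)"
      using i A' y by (auto simp: scalar_prod_def lessThan_atLeast0)
    also have "\<dots> = (\<Sum>j<n. A' $$ (i,Suc j) * y $ j)"
      by (subst sum.lessThan_Suc_shift, simp)
    also have "\<dots> = vCons 0 (A3 *\<^sub>v y) $ i"
    proof (cases i)
      case 0
      have "A' $$ (0, Suc j) = 0" if "j < n" for j using A'sym[of 0 "Suc j"] A'0[of "Suc j"] that by auto
      thus ?thesis using 0 by simp
    next
      case (Suc k)
      thus ?thesis using i A3 y by (auto simp: scalar_prod_def lessThan_atLeast0 A3_def)
    qed
    finally show "(A' *\<^sub>v vCons 0 y) $ i = vCons 0 (A3 *\<^sub>v y) $ i" .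
  qed
  have WtWv: "ws ! i \<bullet> (W *\<^sub>v x) = x $ i" if i: "i < Suc n" and x: "x \<in> carrier_vec (Suc n)" for i x
  proof -
    have "W\<^sup>T *\<^sub>v (W *\<^sub>v x) = x" using W x
      by (subst assoc_mult_mat_vec[symmetric, of _ "Suc n" "Suc n"], auto simp: WtW)
    hence "(W\<^sup>T *\<^sub>v (W *\<^sub>v x)) $ i = x $ i" by simp
    thus ?thesis using i W by (simp add: colW)
  qed
  have Wsprod: "(W *\<^sub>v x) \<bullet> (W *\<^sub>v x') = x \<bullet> x'" if x: "x \<in> carrier_vec (Suc n)" and x': "x' \<in> carrier_vec (Suc n)" for x x'
  proof -
    have "(W\<^sup>T *\<^sub>v (W *\<^sub>v x)) \<bullet> x' = (W *\<^sub>v x) \<bullet> (W *\<^sub>v x')"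
      by (rule transpose_vec_mult_scalar[OF W x'], insert W x, auto)
    moreover have "W\<^sup>T *\<^sub>v (W *\<^sub>v x) = x" using W x
      by (subst assoc_mult_mat_vec[symmetric, of _ "Suc n" "Suc n"], auto simp: WtW)
    ultimately show ?thesis by simp
  qed
  define us where "us = v # map (\<lambda>y. W *\<^sub>v vCons 0 y) ys"
  have ylen: "length ys = n" using ys unfolding orthonormal_eigs_def by auto
  have us0: "us ! 0 = v" unfolding us_def by simp
  have usS: "us ! Suc i = W *\<^sub>v vCons 0 (ys ! i)" if "i < n" for i unfolding us_def using that ylen by simp
  have "orthonormal_eigs A (Suc n) us"
    unfolding orthonormal_eigs_def
  proof (intro conjI allI impI)
    show "length us = Suc n" unfolding us_def using ylen by simp
    show "set us \<subseteq> carrier_vec (Suc n)" unfolding us_def using v W ysc ylen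
      by (auto simp: in_set_conv_nth)
    fix i j assume i: "i < Suc n" and j: "j < Suc n"
    have zero: "v \<bullet> (W *\<^sub>v vCons 0 (ys ! k)) = 0" if "k < n" for k
      using WtWv[of 0 "vCons 0 (ys ! k)"] ysc[OF that] ws(3) by simp
    show "us!i \<bullet> us!j = (if i = j then 1 else 0)"
    proof (cases i)
      case 0 note i0 = this
      show ?thesis
      proof (cases j)
        case 0 thus ?thesis using i0 us0 v1 by simp
      next
        case (Suc l) thus ?thesis using i0 us0 usS[of l] zero[of l] j by simp
      qed
    next
      case (Suc k) note ik = this
      show ?thesis
      proof (cases j)
        case 0
        have "us!i \<bullet> us!j = v \<bullet> (W *\<^sub>v vCons 0 (ys ! k))"
          unfolding 0 us0 ik usS[of k, OF Suc_less_SucD[OF i[unfolded ik]]]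
          by (rule comm_scalar_prod[of _ "Suc n"], insert W ysc[of k] v i ik, auto)
        thus ?thesis using zero[of k] i ik 0 by simp
      next
        case (Suc l)
        have "us!i \<bullet> us!j = ys ! k \<bullet> ys ! l" using i j ik Suc usS[of k] usS[of l] ysc[of k] ysc[of l]
          by (simp add: Wsprod)
        thus ?thesis using ys i j ik Suc unfolding orthonormal_eigs_def by auto
      qed
    qed
  next
    fix i assume i: "i < Suc n"
    show "\<exists>e. A *\<^sub>v us ! i = e \<cdot>\<^sub>v us ! i"
    proof (cases i)
      case 0 thus ?thesis using Av us0 by auto
    next
      case (Suc k)
      with i have k: "k < n" by simp
      from ys k obtain mu where mu: "A3 *\<^sub>v ys ! k = mu \<cdot>\<^sub>v ys ! k" unfolding orthonormal_eigs_def by auto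
      have "A *\<^sub>v us ! i = (A * W) *\<^sub>v vCons 0 (ys ! k)"
        unfolding Suc usS[OF k] using A W ysc[OF k] by simp
      also have "\<dots> = W *\<^sub>v (A' *\<^sub>v vCons 0 (ys ! k))"
        unfolding WA'[symmetric] using A' W ysc[OF k] by simp
      also have "\<dots> = W *\<^sub>v (mu \<cdot>\<^sub>v vCons 0 (ys ! k))"
        unfolding A'cons[OF ysc[OF k]] mu by (simp add: vCons_smult)
      also have "\<dots> = mu \<cdot>\<^sub>v us ! i" unfolding Suc usS[OF k]
        by (rule mult_mat_vec[OF W], insert ysc[OF k], simp)
      finally show ?thesis by blast
    qed
  qed
  thus ?case by blast
qed




fun chT :: "real \<Rightarrow> nat \<Rightarrow> real" where
  "chT s 0 = 1" | "chT s (Suc 0) = s" | "chT s (Suc (Suc k)) = 2 * s * chT s (Suc k) - chT s k"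

fun chU :: "real \<Rightarrow> nat \<Rightarrow> real" where
  "chU s 0 = 0" | "chU s (Suc 0) = 1" | "chU s (Suc (Suc k)) = 2 * s * chU s (Suc k) - chU s k"

lemma chT_cos: "chT (cos th) k = cos (real k * th)"
proof (induction "cos th" k rule: chT.induct)
  case (3 k)
  have a: "cos (real (Suc (Suc k)) * th) = cos (real (Suc k) * th + th)" by (simp add: algebra_simps)
  have b: "cos (real k * th) = cos (real (Suc k) * th - th)" by (simp add: algebra_simps)
  show ?case unfolding chT.simps 3 a b cos_add cos_diff by (simp add: algebra_simps)
qed auto

lemma chT_bound: assumes "\<bar>s\<bar> \<le> 1" shows "\<bar>chT s k\<bar> \<le> 1"
proof -
  have "s = cos (arccos s)" using assms by (simp add: cos_arccos_abs)
  hence "chT s k = cos (real k * arccos s)" using chT_cos by metis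
  thus ?thesis by simp
qed

lemma cheb_zero:
  fixes w :: "nat \<Rightarrow> real"
  assumes rec: "\<And>k. w (Suc (Suc k)) = 2 * s * w (Suc k) - w k" and "w 0 = 0" "w 1 = 0"
  shows "w k = 0"
proof (induction k rule: less_induct)
  case (less k)
  show ?case
  proof (cases k)
    case (Suc j) thus ?thesis using less assms by (cases j, auto)
  qed (use assms in auto)
qed

lemma chU_rec: "chU s (Suc k) = s * chU s k + chT s k"
proof -
  have "chU s (Suc k) - s * chU s k - chT s k = 0"
    by (rule cheb_zero[where w="\<lambda>k. chU s (Suc k) - s * chU s k - chT s k" and s=s], auto simp: algebra_simps)
  thus ?thesis by simp
qed

lemma chU_bound: assumes "\<bar>s\<bar> \<le> 1" shows "\<bar>chU s k\<bar> \<le> real k"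
proof (induction k)
  case (Suc k)
  have "\<bar>chU s (Suc k)\<bar> \<le> \<bar>s\<bar> * \<bar>chU s k\<bar> + \<bar>chT s k\<bar>"
    unfolding chU_rec by (metis abs_mult abs_triangle_ineq)
  also have "\<dots> \<le> 1 * real k + 1"
    by (intro add_mono mult_mono chT_bound assms Suc, auto)
  finally show ?case by simp
qed simp

lemma cheb_repr:
  assumes rec: "\<And>k. w (Suc (Suc k)) = 2 * s * w (Suc k) - w k"
  shows "w k = w 0 * chT s k + (w 1 - s * w 0) * chU s k"
proof -
  have "w k - (w 0 * chT s k + (w 1 - s * w 0) * chU s k) = 0"
    by (rule cheb_zero[where w="\<lambda>k. w k - (w 0 * chT s k + (w 1 - s * w 0) * chU s k)" and s=s],
        auto simp: algebra_simps rec)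
  thus ?thesis by simp
qed

lemma cheb_bound:
  assumes rec: "\<And>k. w (Suc (Suc k)) = 2 * s * w (Suc k) - w k" and s: "\<bar>s\<bar> \<le> 1"
  shows "\<bar>w k\<bar> \<le> \<bar>w 0\<bar> + real k * \<bar>w 1 - s * w 0\<bar>"
proof -
  have "\<bar>w k\<bar> \<le> \<bar>w 0\<bar> * \<bar>chT s k\<bar> + \<bar>w 1 - s * w 0\<bar> * \<bar>chU s k\<bar>"
    unfolding cheb_repr[of w s k, OF rec] by (metis abs_mult abs_triangle_ineq)
  also have "\<dots> \<le> \<bar>w 0\<bar> * 1 + \<bar>w 1 - s * w 0\<bar> * real k"
    by (intro add_mono mult_left_mono chT_bound chU_bound s, auto)
  finally show ?thesis by (simp add: mult.commute)
qed

lemma cheb_one: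
  assumes rec: "\<And>k. w (Suc (Suc k)) = 2 * w (Suc k) - w k"
  shows "w k = w 0 + real k * (w 1 - w 0)"
proof -
  have "w k - (w 0 + real k * (w 1 - w 0)) = 0"
    by (rule cheb_zero[where w="\<lambda>k. w k - (w 0 + real k * (w 1 - w 0))" and s=1],
        auto simp: algebra_simps rec)
  thus ?thesis by simp
qed




lemma key_alg:
  fixes mu1 L1 mu2 L2 :: real
  assumes a: "0 < mu1" "mu1 < L1" "L1 \<le> mu2" "mu2 < L2" "L1 - mu1 = L2 - mu2"
  defines "rho \<equiv> (L2 + mu1) / (L2 - mu1)"
      and "R \<equiv> (mu2 - L1) / (L2 - mu1)"
  defines "q \<equiv> (sqrt (rho^2 - R^2) - sqrt (rho^2 - 1)) / sqrt (1 - R^2)"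
  defines "m \<equiv> q^2"
  shows "0 < q" "q < 1" "0 < m" "m < 1" "(1+m)^2 * ((L1-mu1)*(mu2-mu1)) = 4*m*(L1*mu2)"
    "sqrt ((rho^2 - 1) / (rho^2 - R^2)) = (1-m)/(1+m)"
proof -
  define D where "D = L2 - mu1"
  have D: "D > 0" unfolding D_def using a by auto
  have L2: "L2 = mu2 + L1 - mu1" using a by simp
  have D2: "D^2 > 0" using D by simp
  have r: "rho = (L2+mu1)/D" "R = (mu2-L1)/D" unfolding rho_def R_def D_def by auto
  have e1: "rho^2 - R^2 = 4 * (L1 * mu2) / D^2"
  proof -
    have "rho^2 - R^2 = ((L2+mu1)^2 - (mu2-L1)^2)/D^2" unfolding r power_divide by (rule diff_divide_distrib[symmetric])
    also have "(L2+mu1)^2 - (mu2-L1)^2 = 4*(L1*mu2)" unfolding L2 by (simp add: power2_eq_square algebra_simps)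
    finally show ?thesis .
  qed
  have e2: "rho^2 - 1 = 4 * (L2 * mu1) / D^2"
  proof -
    have "rho^2 - 1 = ((L2+mu1)^2 - D^2)/D^2" unfolding r power_divide using D2 by (simp add: field_simps)
    also have "(L2+mu1)^2 - D^2 = 4*(L2*mu1)" unfolding D_def by (simp add: power2_eq_square algebra_simps)
    finally show ?thesis .
  qed
  have e3: "1 - R^2 = 4 * ((L1-mu1)*(mu2-mu1)) / D^2"
  proof -
    have "1 - R^2 = (D^2 - (mu2-L1)^2)/D^2" unfolding r power_divide using D2 by (simp add: field_simps)
    also have "D^2 - (mu2-L1)^2 = 4*((L1-mu1)*(mu2-mu1))" unfolding D_def L2 by (simp add: power2_eq_square algebra_simps)
    finally show ?thesis .
  qed
  define A where "A = sqrt (rho^2 - R^2)"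
  define B where "B = sqrt (rho^2 - 1)"
  define C where "C = sqrt (1 - R^2)"
  have p1: "rho^2 - R^2 > 0" unfolding e1 using a D by (auto intro!: divide_pos_pos mult_pos_pos)
  have p2: "rho^2 - 1 > 0" unfolding e2 using a D by (auto intro!: divide_pos_pos mult_pos_pos)
  have p3: "1 - R^2 > 0" unfolding e3 using a D by (auto intro!: divide_pos_pos mult_pos_pos)
  have A2: "A^2 = rho^2 - R^2" and B2: "B^2 = rho^2 - 1" and C2: "C^2 = 1 - R^2"
    unfolding A_def B_def C_def using p1 p2 p3 by auto
  have Ap: "A > 0" and Bp: "B > 0" and Cp: "C > 0" unfolding A_def B_def C_def using p1 p2 p3 by auto
  have ABC: "C^2 = (A - B) * (A + B)" using A2 B2 C2 by (simp add: algebra_simps power2_eq_square)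
  have BA: "B < A" unfolding A_def B_def using p3 by (intro real_sqrt_less_mono) simp
  have q: "q = (A - B) / C" unfolding q_def A_def B_def C_def ..
  show qp: "0 < q" unfolding q using BA Cp by simp
  have m: "m = (A - B) / (A + B)" unfolding m_def q power_divide ABC using BA Ap Bp
    by (simp add: power2_eq_square)
  show mp: "0 < m" unfolding m using BA Bp by simp
  show m1: "m < 1" unfolding m using BA Bp by simp
  show "q < 1"
  proof (rule ccontr)
    assume "\<not> q < 1"
    hence "1 \<le> q^2" by (intro one_le_power) simp
    thus False using m1 unfolding m_def by simp
  qed
  have "sqrt ((rho^2 - 1) / (rho^2 - R^2)) = B / A" unfolding A_def B_def by (simp add: real_sqrt_divide)
  also have "\<dots> = (1-m)/(1+m)"
  proof -
    have a1: "1 - m = 2*B/(A+B)" unfolding m using Ap Bp by (simp add: field_simps)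
    have a2: "1 + m = 2*A/(A+B)" unfolding m using Ap Bp by (simp add: field_simps)
    have "B * (1+m) = A * (1-m)" unfolding a1 a2 by (simp add: ac_simps)
    moreover have "A \<noteq> 0" "1 + m \<noteq> 0" using Ap mp by auto
    ultimately show ?thesis by (simp add: frac_eq_eq)
  qed
  finally show "sqrt ((rho^2 - 1) / (rho^2 - R^2)) = (1-m)/(1+m)" .
  have "A^2 * ((L1-mu1)*(mu2-mu1)) = C^2 * (L1*mu2)" unfolding A2 C2 e1 e3 by simp
  hence key: "A^2 * ((L1-mu1)*(mu2-mu1)) = (A - B) * (A + B) * (L1*mu2)" unfolding ABC .
  show "(1+m)^2 * ((L1-mu1)*(mu2-mu1)) = 4*m*(L1*mu2)"
  proof -
    have "1 + m = 2 * A / (A + B)" unfolding m using Ap Bp by (simp add: field_simps)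
    hence "(1+m)^2 * ((L1-mu1)*(mu2-mu1)) = 4 * (A^2 * ((L1-mu1)*(mu2-mu1))) / (A+B)^2"
      by (simp add: power_divide power_mult_distrib)
    also have "\<dots> = 4 * ((A - B) * (A + B) * (L1*mu2)) / (A+B)^2" unfolding key ..
    also have "\<dots> = (4*(A-B)*(L1*mu2)) * (A+B) / ((A+B)*(A+B))"
      by (simp only: power2_eq_square mult.assoc mult.commute mult.left_commute)
    also have "\<dots> = (4*(A-B)*(L1*mu2)) / (A+B)"
      by (rule nonzero_mult_divide_mult_cancel_right) (use Ap Bp in linarith)
    also have "\<dots> = 4*m*(L1*mu2)" unfolding m by simp

    finally show ?thesis .
  qed
qed




fun ps :: "real list \<Rightarrow> real \<Rightarrow> real \<Rightarrow> nat \<Rightarrow> real" where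
  "ps hs m l 0 = 1"
| "ps hs m l (Suc 0) = 1 - hs ! 0 / (1 + m) * l"
| "ps hs m l (Suc (Suc t)) = ps hs m l (Suc t) - hs ! (Suc t mod length hs) * l * ps hs m l (Suc t)
     + m * (ps hs m l (Suc t) - ps hs m l t)"

lemma hb_carrier:
  assumes H: "H \<in> carrier_mat d d" and xs: "xs \<in> carrier_vec d" and x0: "x0 \<in> carrier_vec d"
  shows "hb hs m (quad_grad H xs) x0 t \<in> carrier_vec d"
proof (induction t rule: less_induct)
  case (less t)
  show ?case
  proof (cases t)
    case (Suc k)
    thus ?thesis using less x0 xs H by (cases k, auto simp: quad_grad_def)
  qed (use x0 in simp)
qed

lemma hb_eig:
  assumes H: "H \<in> carrier_mat d d" and sym: "H\<^sup>T = H" and xs: "xs \<in> carrier_vec d"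
    and x0: "x0 \<in> carrier_vec d" and u: "u \<in> carrier_vec d" and Hu: "H *\<^sub>v u = l \<cdot>\<^sub>v u"
  shows "u \<bullet> (hb hs m (quad_grad H xs) x0 t - xs) = ps hs m l t * (u \<bullet> (x0 - xs))"
proof -
  let ?x = "hb hs m (quad_grad H xs) x0"
  have xc: "?x t \<in> carrier_vec d" for t by (rule hb_carrier[OF H xs x0])
  have g: "u \<bullet> quad_grad H xs y = l * (u \<bullet> (y - xs))" if y: "y \<in> carrier_vec d" for y
  proof -
    have "u \<bullet> quad_grad H xs y = (H\<^sup>T *\<^sub>v u) \<bullet> (y - xs)" unfolding quad_grad_def
      by (rule transpose_vec_mult_scalar[symmetric, OF H], insert y xs u, auto)
    thus ?thesis unfolding sym Hu using u y xs by simp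
  qed
  have gc: "quad_grad H xs y \<in> carrier_vec d" if "y \<in> carrier_vec d" for y
    unfolding quad_grad_def using H that xs by auto
  show ?thesis
  proof (induction t rule: less_induct)
    case (less t)
    show ?case
    proof (cases t)
      case 0 thus ?thesis by simp
    next
      case (Suc k)
      show ?thesis
      proof (cases k)
        case 0
        have "u \<bullet> (?x t - xs) = u \<bullet> ((x0 - xs) - (hs ! 0 / (1 + m)) \<cdot>\<^sub>v quad_grad H xs x0)"
          unfolding Suc 0 by (intro arg_cong[where f="\<lambda>z. u \<bullet> z"] eq_vecI, insert x0 xs gc[OF x0], auto)
        also have "\<dots> = u \<bullet> (x0 - xs) - (hs ! 0 / (1 + m)) * (u \<bullet> quad_grad H xs x0)"
          using u x0 xs gc[OF x0] by (simp add: scalar_prod_minus_distrib[of _ d])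
        also have "\<dots> = ps hs m l t * (u \<bullet> (x0 - xs))" unfolding g[OF x0] Suc 0 by (simp add: algebra_simps)
        finally show ?thesis .
      next
        case (Suc j)
        note t = \<open>t = Suc k\<close>[unfolded Suc]
        let ?h = "hs ! (Suc j mod length hs)"
        have IH1: "u \<bullet> (?x (Suc j) - xs) = ps hs m l (Suc j) * (u \<bullet> (x0 - xs))" using less t by simp
        have IH0: "u \<bullet> (?x j - xs) = ps hs m l j * (u \<bullet> (x0 - xs))" using less t by simp
        have eq: "?x t - xs = (?x (Suc j) - xs) - ?h \<cdot>\<^sub>v quad_grad H xs (?x (Suc j))
             + m \<cdot>\<^sub>v ((?x (Suc j) - xs) - (?x j - xs))"
          unfolding t hb.simps
          by (rule eq_vecI, insert xc[of "Suc j"] xc[of j] xs gc[OF xc[of "Suc j"]], auto)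
        have "u \<bullet> (?x t - xs) = u \<bullet> (?x (Suc j) - xs) - ?h * (u \<bullet> quad_grad H xs (?x (Suc j)))
             + m * (u \<bullet> (?x (Suc j) - xs) - u \<bullet> (?x j - xs))"
          unfolding eq using u xc[of "Suc j"] xc[of j] xs gc[OF xc[of "Suc j"]]
          by (simp add: scalar_prod_add_distrib[of _ d] scalar_prod_minus_distrib[of _ d])
        also have "\<dots> = ps hs m l t * (u \<bullet> (x0 - xs))"
          unfolding g[OF xc] IH1 IH0 t by (simp add: algebra_simps)
        finally show ?thesis .
      qed
    qed
  qed
qed

lemma parseval:
  assumes us: "orthonormal_eigs H d us" and x: "x \<in> carrier_vec d"
  shows "x \<bullet> x = (\<Sum>i<d. (us ! i \<bullet> x)^2)"
proof -
  have len: "length us = d" and usc: "\<And>i. i < d \<Longrightarrow> us ! i \<in> carrier_vec d"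
    and on: "\<And>i j. i < d \<Longrightarrow> j < d \<Longrightarrow> us!i \<bullet> us!j = (if i = j then 1 else 0)"
    using us unfolding orthonormal_eigs_def by auto
  define Q where "Q = mat_of_cols d us"
  have Q: "Q \<in> carrier_mat d d" unfolding Q_def using len by auto
  have colQ: "col Q j = us ! j" if "j < d" for j unfolding Q_def using len that usc by auto
  have QtQ: "Q\<^sup>T * Q = 1\<^sub>m d" by (rule eq_matI, insert Q, auto simp: colQ on)
  have QQt: "Q * Q\<^sup>T = 1\<^sub>m d" by (rule mat_mult_left_right_inverse[OF _ Q QtQ], insert Q, auto)
  have "Q *\<^sub>v (Q\<^sup>T *\<^sub>v x) = x" using Q x
    by (subst assoc_mult_mat_vec[symmetric, of _ d d], auto simp: QQt)
  hence "x \<bullet> x = x \<bullet> (Q *\<^sub>v (Q\<^sup>T *\<^sub>v x))" by simp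
  also have "\<dots> = (Q\<^sup>T *\<^sub>v x) \<bullet> (Q\<^sup>T *\<^sub>v x)"
    by (rule transpose_vec_mult_scalar[symmetric, OF Q], insert Q x, auto)
  also have "\<dots> = (\<Sum>i<d. (us ! i \<bullet> x)^2)"
    using Q by (auto simp: scalar_prod_def lessThan_atLeast0 colQ power2_eq_square intro!: sum.cong)
  finally show ?thesis .
qed

lemma norm_bound:
  assumes cls: "in_class Lam d H xs" and x0: "x0 \<in> carrier_vec d"
    and M: "\<And>l. l \<in> Lam \<Longrightarrow> \<bar>ps hs m l t\<bar> \<le> M" and M0: "M \<ge> 0"
  shows "vnorm (hb hs m (quad_grad H xs) x0 t - xs) \<le> M * vnorm (x0 - xs)"
proof -
  from cls have H: "H \<in> carrier_mat d d" and sym: "H\<^sup>T = H" and xs: "xs \<in> carrier_vec d"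
    and ev: "\<And>l. eigenvalue H l \<Longrightarrow> l \<in> Lam" unfolding in_class_def by auto
  from spectral_real_sym[OF H sym] obtain us where us: "orthonormal_eigs H d us" by auto
  have usc: "\<And>i. i < d \<Longrightarrow> us ! i \<in> carrier_vec d"
    and on: "\<And>i. i < d \<Longrightarrow> us!i \<bullet> us!i = 1"
    using us unfolding orthonormal_eigs_def by auto
  let ?e = "hb hs m (quad_grad H xs) x0 t - xs"
  have ec: "?e \<in> carrier_vec d" using hb_carrier[OF H xs x0] xs by auto
  have e0c: "x0 - xs \<in> carrier_vec d" using x0 xs by auto
  have comp: "(us ! i \<bullet> ?e)^2 \<le> M^2 * (us ! i \<bullet> (x0 - xs))^2" if i: "i < d" for i
  proof -
    from us i obtain l where Hu: "H *\<^sub>v us ! i = l \<cdot>\<^sub>v us ! i" unfolding orthonormal_eigs_def by auto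
    have "us ! i \<noteq> 0\<^sub>v d" using on[OF i] usc[OF i] by auto
    hence "eigenvalue H l" unfolding eigenvalue_def eigenvector_def using usc[OF i] Hu H by auto
    hence "\<bar>ps hs m l t\<bar> \<le> M" using ev M by auto
    hence "(ps hs m l t)^2 \<le> M^2" using abs_le_square_iff by fastforce
    moreover have "us ! i \<bullet> ?e = ps hs m l t * (us ! i \<bullet> (x0 - xs))"
      by (rule hb_eig[OF H sym xs x0 usc[OF i] Hu])
    ultimately show ?thesis by (simp add: power_mult_distrib mult_right_mono)
  qed
  have "?e \<bullet> ?e \<le> M^2 * ((x0 - xs) \<bullet> (x0 - xs))"
    unfolding parseval[OF us ec] parseval[OF us e0c] sum_distrib_left
    by (rule sum_mono, rule comp, auto)
  hence "sqrt (?e \<bullet> ?e) \<le> sqrt (M^2 * ((x0 - xs) \<bullet> (x0 - xs)))" by (rule real_sqrt_le_mono)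
  thus ?thesis unfolding vnorm_def using M0 by (simp add: real_sqrt_mult)
qed




lemma ps2step:
  fixes ga gb m l :: real
  shows "ps [ga,gb] m l (t+4) = ((1 + m - ga*l)*(1 + m - gb*l) - 2*m) * ps [ga,gb] m l (t+2) - m^2 * ps [ga,gb] m l t"
proof -
  let ?P = "ps [ga,gb] m l"
  define co where "co n = 1 + m - [ga,gb] ! (Suc n mod 2) * l" for n
  have r: "?P (Suc (Suc n)) = co n * ?P (Suc n) - m * ?P n" for n
    unfolding co_def by (simp add: algebra_simps numeral_2_eq_2)
  have r4: "?P (t+4) = co (t+2) * ?P (t+3) - m * ?P (t+2)" using r[of "t+2"] by (simp add: numeral_eq_Suc)
  have r3: "?P (t+3) = co (t+1) * ?P (t+2) - m * ?P (t+1)" using r[of "t+1"] by (simp add: numeral_eq_Suc)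
  have r2: "co t * ?P (t+1) = ?P (t+2) + m * ?P t" using r[of t] by (simp add: numeral_eq_Suc)
  have c2: "co (t+2) = co t" unfolding co_def by simp
  have cc: "co t * co (t+1) = (1 + m - ga*l)*(1 + m - gb*l)"
    unfolding co_def by (cases "even t") (auto simp: mod_Suc even_iff_mod_2_eq_zero odd_iff_mod_2_eq_one)
  have "?P (t+4) = co t * co (t+1) * ?P (t+2) - m * (co t * ?P (t+1)) - m * ?P (t+2)"
    unfolding r4 r3 c2 by (simp add: algebra_simps)
  also have "\<dots> = ((1 + m - ga*l)*(1 + m - gb*l) - 2*m) * ?P (t+2) - m^2 * ?P t"
    unfolding r2 cc by (simp add: algebra_simps power2_eq_square)
  finally show ?thesis .
qed

locale hbset =
  fixes mu1 L1 mu2 L2 m q c :: real and hs :: "real list"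
  assumes a: "0 < mu1" "mu1 < L1" "L1 \<le> mu2" "mu2 < L2" "L1 - mu1 = L2 - mu2"
    and q: "0 < q" "q < 1" and mq: "m = q^2"
    and key: "(1+m)^2 * ((L1-mu1)*(mu2-mu1)) = 4*m*(L1*mu2)"
    and c: "c = (1-m)/(1+m)"
    and hs: "hs = [(1+m)/L1, (1+m)/mu2] \<or> hs = [(1+m)/mu2, (1+m)/L1]"
begin

definition Lam where "Lam = {mu1..L1} \<union> {mu2..L2}"
definition pr where "pr l = (1+m)^2 * ((L1-l)*(mu2-l)) / (L1*mu2)"

lemma m: "0 < m" "m < 1" using q unfolding mq by (auto simp: power_less_one_iff)

lemma c01: "0 \<le> c" "c \<le> 1" unfolding c using m by auto

lemma hs_obtain:
  obtains ga gb where "hs = [ga,gb]" "\<And>l. (1 + m - ga*l)*(1 + m - gb*l) = pr l"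
    "ga \<ge> 0" "gb \<ge> 0" "ga \<le> (1+m)/mu1" "gb \<le> (1+m)/mu1"
proof -
  have L1: "L1 > 0" and mu2: "mu2 > 0" using a by auto
  have e: "(1 + m - (1+m)/L1*l)*(1 + m - (1+m)/mu2*l) = pr l" for l
    unfolding pr_def using L1 mu2 by (simp add: field_simps power2_eq_square)
  have b1: "(1+m)/L1 \<le> (1+m)/mu1" and b2: "(1+m)/mu2 \<le> (1+m)/mu1"
    using a m by (auto intro!: divide_left_mono)
  have p1: "(1+m)/L1 \<ge> 0" "(1+m)/mu2 \<ge> 0" using L1 mu2 m by auto
  from hs show ?thesis
  proof
    assume "hs = [(1+m)/L1, (1+m)/mu2]"
    thus ?thesis using that[of "(1+m)/L1" "(1+m)/mu2"] e b1 b2 p1 by auto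
  next
    assume "hs = [(1+m)/mu2, (1+m)/L1]"
    thus ?thesis using that[of "(1+m)/mu2" "(1+m)/L1"] e b1 b2 p1 by (auto simp: mult.commute)
  qed
qed

lemma pr_mu1: "pr mu1 = 4*m"
  unfolding pr_def key using a by simp

lemma pr_bounds: assumes l: "l \<in> Lam" shows "0 \<le> pr l" "pr l \<le> 4*m"
proof -
  have K: "(1+m)^2 / (L1*mu2) > 0" using a m by auto
  have pr': "pr l = (1+m)^2 / (L1*mu2) * ((L1-l)*(mu2-l))" unfolding pr_def by simp
  have "0 \<le> (L1-l)*(mu2-l) \<and> (L1-l)*(mu2-l) \<le> (L1-mu1)*(mu2-mu1)"
  proof (cases "l \<le> L1")
    case True
    with l have l1: "mu1 \<le> l" unfolding Lam_def using a by auto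
    have "(L1-l)*(mu2-l) \<le> (L1-mu1)*(mu2-l)" by (rule mult_right_mono, use l1 True a in auto)
    also have "\<dots> \<le> (L1-mu1)*(mu2-mu1)" by (rule mult_left_mono, use l1 True a in auto)
    finally show ?thesis using True a by auto
  next
    case False
    with l have l1: "mu2 \<le> l" "l \<le> L2" unfolding Lam_def using a by auto
    have eq: "(L1-l)*(mu2-l) = (l-L1)*(l-mu2)" by (simp add: algebra_simps)
    have "(l-L1)*(l-mu2) \<le> (L2-L1)*(l-mu2)" by (rule mult_right_mono, use l1 a in auto)
    also have "\<dots> \<le> (L2-L1)*(L2-mu2)" by (rule mult_left_mono, use l1 a in auto)
    also have "\<dots> = (L1-mu1)*(mu2-mu1)"
    proof -
      have "L2 - L1 = mu2 - mu1" "L2 - mu2 = L1 - mu1" using a(5) by linarith+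
      thus ?thesis by (simp add: mult.commute)
    qed
    finally show ?thesis unfolding eq using l1 a False by auto
  qed
  hence h: "0 \<le> (L1-l)*(mu2-l)" "(L1-l)*(mu2-l) \<le> (L1-mu1)*(mu2-mu1)" by auto
  show "0 \<le> pr l" unfolding pr' by (rule mult_nonneg_nonneg) (use K h in linarith)+
  have "pr l \<le> (1+m)^2 / (L1*mu2) * ((L1-mu1)*(mu2-mu1))" unfolding pr'
    by (rule mult_left_mono[OF h(2)], use K in simp)
  also have "\<dots> = 4*m"
  proof -
    have "L1*mu2 \<noteq> 0" using a by auto
    thus ?thesis by (simp only: times_divide_eq_left key) simp
  qed
  finally show "pr l \<le> 4*m" .
qed

lemma even_rec:
  fixes l :: real
  assumes "hs = [ga,gb]" "\<And>l. (1 + m - ga*l)*(1 + m - gb*l) = pr l"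
  defines "s \<equiv> (pr l - 2*m) / (2*m)"
  shows "ps hs m l (2*k + 2*2) / m^(k+2) = 2 * s * (ps hs m l (2*k+2) / m^(k+1)) - ps hs m l (2*k) / m^k"
    "ps hs m l (2*k+1 + 2*2) / m^(k+2) = 2 * s * (ps hs m l (2*k+1+2) / m^(k+1)) - ps hs m l (2*k+1) / m^k"
proof -
  have mp: "m > 0" "m \<noteq> 0" using m by auto
  define P where "P = ps hs m l"
  have gen: "P (t+4) / m^(k+2) = 2 * s * (P (t+2) / m^(k+1)) - P t / m^k" for t
  proof -
    have e: "P (t+4) = (pr l - 2*m) * P (t+2) - m^2 * P t"
      using ps2step[of ga gb m l t] assms(1,2) unfolding P_def by simp
    show ?thesis unfolding e s_def using mp by (simp add: field_simps power_add power2_eq_square)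
  qed
  show "ps hs m l (2*k + 2*2) / m^(k+2) = 2 * s * (ps hs m l (2*k+2) / m^(k+1)) - ps hs m l (2*k) / m^k"
    using gen[of "2*k"] unfolding P_def by simp
  show "ps hs m l (2*k+1 + 2*2) / m^(k+2) = 2 * s * (ps hs m l (2*k+1+2) / m^(k+1)) - ps hs m l (2*k+1) / m^k"
    using gen[of "2*k+1"] unfolding P_def by (simp add: add.assoc)
qed


lemma P_rec: "ps hs m l (Suc (Suc n)) = (1 + m - hs ! (Suc n mod length hs) * l) * ps hs m l (Suc n) - m * ps hs m l n"
  by (simp add: algebra_simps)

definition Am where "Am = 2 + 2 * L2 / mu1"
definition Cst where "Cst = Am + (Am*(Am*Am+1) + Am)/m"

lemma Am_pos: "Am \<ge> 0" unfolding Am_def using a by auto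

lemma coef_bound:
  assumes l: "l \<in> Lam" and g: "0 \<le> g" "g \<le> (1+m)/mu1"
  shows "\<bar>1 + m - g*l\<bar> \<le> Am"
proof -
  have l1: "mu1 \<le> l" "l \<le> L2" using l a unfolding Lam_def by auto
  have gl0: "0 \<le> g*l" using g l1 a by auto
  have "g*l \<le> (1+m)/mu1 * L2" by (rule mult_mono, use g l1 a in auto)
  also have "\<dots> \<le> 2/mu1 * L2" by (rule mult_right_mono, use m a in \<open>auto simp: divide_right_mono\<close>)
  finally have "g*l \<le> 2 * L2 / mu1" by simp
  thus ?thesis unfolding Am_def using gl0 m by auto
qed

lemma even_odd_bounds:
  assumes l: "l \<in> Lam"
  shows "\<bar>ps hs m l (2*k)\<bar> \<le> m^k * (1 + 2*real k*c)"
    "\<bar>ps hs m l (2*k+1)\<bar> \<le> m^k * ((real k + 1) * Cst)"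
    "l = mu1 \<Longrightarrow> ps hs m l (2*k) = m^k * (1 + 2*real k*c)"
proof -
  obtain ga gb where g1: "hs = [ga,gb]" and g2: "\<And>l. (1 + m - ga*l)*(1 + m - gb*l) = pr l"
    and g3: "ga \<ge> 0" "gb \<ge> 0" "ga \<le> (1+m)/mu1" "gb \<le> (1+m)/mu1" by (rule hs_obtain) blast
  have mp: "m > 0" "m \<noteq> 0" "1 + m > 0" "1 + m \<noteq> 0" using m by auto
  define P where "P = ps hs m l"
  have P4: "P (t+4) = (pr l - 2*m) * P (t+2) - m^2 * P t" for t
    using ps2step[of ga gb m l t] g1 g2 unfolding P_def by simp
  define s where "s = (pr l - 2*m)/(2*m)"
  have s: "\<bar>s\<bar> \<le> 1" unfolding s_def using pr_bounds[OF l] mp by (auto simp: abs_le_iff field_simps)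
  have gen: "\<And>k. w (Suc (Suc k)) = 2*s*w (Suc k) - w k" if w: "\<And>k. w k = P (2*k + j) / m^k" for w j
  proof -
    fix k
    have e1: "2*Suc(Suc k) + j = (2*k+j)+4" and e2: "2*Suc k + j = (2*k+j)+2" by simp_all
    define t where "t = 2*k+j"
    have A: "w (Suc (Suc k)) = ((pr l - 2*m) * P (t+2) - m^2 * P t) / (m^k * m^2)"
      unfolding w e1 t_def[symmetric] P4 by (simp add: power_add power2_eq_square)
    have B: "w (Suc k) = P (t+2) / (m^k * m)" unfolding w e2 t_def[symmetric] by simp
    have C: "w k = P t / m^k" unfolding w t_def ..
    show "w (Suc (Suc k)) = 2*s*w (Suc k) - w k"
      unfolding A B C s_def using mp by (simp add: field_simps power2_eq_square)
  qed
  have P0: "P 0 = 1" unfolding P_def by simp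
  have P1: "P 1 = (1 + m - ga*l)/(1+m)" unfolding P_def g1 using mp by (simp add: field_simps)
  have P2: "P 2 = (1 + m - gb*l) * P 1 - m * P 0"
  proof -
    have "P (Suc (Suc 0)) = (1 + m - hs ! (Suc 0 mod length hs) * l) * P (Suc 0) - m * P 0"
      unfolding P_def by (rule P_rec)
    thus ?thesis using g1 by (simp add: numeral_2_eq_2)
  qed
  have P3: "P 3 = (1 + m - ga*l) * P 2 - m * P 1"
  proof -
    have "P (Suc (Suc 1)) = (1 + m - hs ! (Suc 1 mod length hs) * l) * P (Suc 1) - m * P 1"
      unfolding P_def by (rule P_rec)
    thus ?thesis using g1 by (simp add: numeral_2_eq_2 numeral_3_eq_3)
  qed
  have P2': "P 2 = pr l / (1+m) - m" unfolding P2 P1 P0 g2[symmetric] using mp by (simp add: field_simps)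
  define w where "w k = P (2*k + 0) / m^k" for k
  have wrec: "\<And>k. w (Suc (Suc k)) = 2*s*w (Suc k) - w k" by (rule gen) (rule w_def)
  have w0: "w 0 = 1" unfolding w_def by (simp add: P0)
  have w1: "w 1 - s * w 0 = pr l / (2*m) * c"
  proof -
    define y where "y = pr l / (1+m)"
    have x: "pr l = y * (1+m)" unfolding y_def using mp by simp
    have cc: "(1+m)*c = 1-m" unfolding c using mp by simp
    have w1v: "w 1 = P 2 / m" unfolding w_def by simp
    have "w 1 - s * w 0 = (y - m)/m - (y*(1+m) - 2*m)/(2*m)"
      unfolding w1v w0 P2' s_def y_def[symmetric] x[symmetric] by simp
    also have "\<dots> = y*(1-m)/(2*m)" using mp by (simp add: field_simps)
    also have "\<dots> = y*((1+m)*c)/(2*m)" unfolding cc ..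
    also have "\<dots> = pr l / (2*m) * c" unfolding x by simp
    finally show ?thesis .
  qed
  have h2: "0 \<le> pr l/(2*m)" "pr l/(2*m) \<le> 2" using pr_bounds[OF l] mp by (auto simp: divide_le_eq)
  have w1b: "\<bar>w 1 - s * w 0\<bar> \<le> 2 * c"
  proof -
    have "\<bar>w 1 - s * w 0\<bar> = pr l/(2*m) * c" unfolding w1 using h2 c01 by (intro abs_of_nonneg mult_nonneg_nonneg)
    also have "\<dots> \<le> 2 * c" by (rule mult_right_mono, use h2 c01 in auto)
    finally show ?thesis .
  qed
  have Pw: "P (2*k) = m^k * w k" unfolding w_def using mp by simp
  have "\<bar>w k\<bar> \<le> \<bar>w 0\<bar> + real k * \<bar>w 1 - s * w 0\<bar>" by (rule cheb_bound[of w s k, OF wrec s])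
  also have "\<dots> \<le> 1 + real k * (2 * c)" by (intro add_mono mult_left_mono w1b) (auto simp: w0)
  finally have "\<bar>w k\<bar> \<le> 1 + 2 * real k * c" by simp
  thus "\<bar>ps hs m l (2*k)\<bar> \<le> m^k * (1 + 2*real k*c)" unfolding P_def[symmetric] Pw
    using mp by (simp add: abs_mult)
  show "ps hs m l (2*k) = m^k * (1 + 2*real k*c)" if lm: "l = mu1"
  proof -
    have s1: "s = 1" unfolding s_def lm pr_mu1 using mp by simp
    have "w k = w 0 + real k * (w 1 - w 0)" by (rule cheb_one, use wrec[unfolded s1] in simp)
    also have "\<dots> = 1 + 2 * real k * c" using w1 unfolding s1 lm pr_mu1 w0 using mp by simp
    finally show ?thesis unfolding P_def[symmetric] Pw by simp
  qed
  define v where "v k = P (2*k + 1) / m^k" for k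
  have vrec: "\<And>k. v (Suc (Suc k)) = 2*s*v (Suc k) - v k" by (rule gen) (rule v_def)
  have cga: "\<bar>1 + m - ga*l\<bar> \<le> Am" by (rule coef_bound[OF l g3(1,3)])
  have cgb: "\<bar>1 + m - gb*l\<bar> \<le> Am" by (rule coef_bound[OF l g3(2,4)])
  have bP1: "\<bar>P 1\<bar> \<le> Am"
  proof -
    have "\<bar>P 1\<bar> = \<bar>1 + m - ga*l\<bar> / (1+m)" unfolding P1 using mp by simp
    also have "\<dots> \<le> \<bar>1 + m - ga*l\<bar>" using mp mult_left_mono[of 1 "1+m" "\<bar>1+m-ga*l\<bar>"] by (simp add: divide_le_eq)
    finally show ?thesis using cga by simp
  qed
  have tri: "\<bar>x*y - m*z\<bar> \<le> \<bar>x\<bar>*\<bar>y\<bar> + m*\<bar>z\<bar>" for x y z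
    using mp abs_triangle_ineq4[of "x*y" "m*z"] by (simp add: abs_mult)
  have bP2: "\<bar>P 2\<bar> \<le> Am*Am + 1"
  proof -
    have "\<bar>P 2\<bar> \<le> \<bar>1 + m - gb*l\<bar> * \<bar>P 1\<bar> + m * \<bar>P 0\<bar>" unfolding P2
      by (rule tri)
    also have "\<dots> \<le> Am * Am + 1 * 1" unfolding P0
      by (intro add_mono mult_mono cgb bP1, use mp Am_pos m in auto)
    finally show ?thesis by simp
  qed
  have bP3: "\<bar>P 3\<bar> \<le> Am*(Am*Am + 1) + Am"
  proof -
    have "\<bar>P 3\<bar> \<le> \<bar>1 + m - ga*l\<bar> * \<bar>P 2\<bar> + m * \<bar>P 1\<bar>" unfolding P3
      by (rule tri)
    also have "\<dots> \<le> Am * (Am*Am + 1) + 1 * Am"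
      by (intro add_mono mult_mono cga bP2 bP1, use mp Am_pos m in auto)
    finally show ?thesis by simp
  qed
  have v0: "v 0 = P 1" unfolding v_def by simp
  have v1: "v 1 = P 3 / m" unfolding v_def by (simp add: numeral_3_eq_3)
  have "\<bar>v k\<bar> \<le> \<bar>v 0\<bar> + real k * \<bar>v 1 - s * v 0\<bar>" by (rule cheb_bound[of v s k, OF vrec s])
  also have "\<dots> \<le> Am + real k * ((Am*(Am*Am+1) + Am)/m + Am)"
  proof (intro add_mono mult_left_mono)
    show "\<bar>v 0\<bar> \<le> Am" using bP1 v0 by simp
    have "\<bar>v 1 - s * v 0\<bar> \<le> \<bar>v 1\<bar> + \<bar>s\<bar> * \<bar>v 0\<bar>"
      using abs_triangle_ineq4[of "v 1" "s * v 0"] by (simp add: abs_mult)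
    also have "\<dots> \<le> (Am*(Am*Am+1) + Am)/m + 1 * Am"
    proof (rule add_mono)
      have "\<bar>v 1\<bar> = \<bar>P 3\<bar> / m" unfolding v1 using mp by simp
      also have "\<dots> \<le> (Am*(Am*Am+1) + Am)/m" by (rule divide_right_mono[OF bP3], use mp in simp)
      finally show "\<bar>v 1\<bar> \<le> (Am*(Am*Am+1) + Am)/m" .
      show "\<bar>s\<bar> * \<bar>v 0\<bar> \<le> 1 * Am" by (rule mult_mono, use s bP1 v0 Am_pos in auto)
    qed
    finally show "\<bar>v 1 - s * v 0\<bar> \<le> (Am*(Am*Am+1) + Am)/m + Am" by simp
  qed auto
  also have "\<dots> \<le> (real k + 1) * Cst"
  proof -
    define X where "X = (Am*(Am*Am+1) + Am)/m"
    have X0: "0 \<le> X" unfolding X_def using Am_pos mp by simp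
    have "Am + real k * (X + Am) \<le> (real k + 1) * (Am + X)" using X0 by (simp add: algebra_simps)
    thus ?thesis unfolding Cst_def X_def .
  qed
  finally have vb: "\<bar>v k\<bar> \<le> (real k + 1) * Cst" .
  have Pv: "P (2*k+1) = m^k * v k" unfolding v_def using mp by simp
  show "\<bar>ps hs m l (2*k+1)\<bar> \<le> m^k * ((real k + 1) * Cst)" unfolding P_def[symmetric] Pv
    using mp vb by (simp add: abs_mult mult_left_mono)
qed

end




context hbset begin

definition KK where "KK = 1 + Cst / q"

lemma Cst_nonneg: "Cst \<ge> 0" unfolding Cst_def using Am_pos m by simp

lemma KK_ge1: "KK \<ge> 1" unfolding KK_def using Cst_nonneg q by simp

lemma total_bound: assumes l: "l \<in> Lam" shows "\<bar>ps hs m l t\<bar> \<le> KK * (real t + 1) * q^t"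
proof (cases "even t")
  case True
  then obtain k where t: "t = 2*k" by auto
  have "\<bar>ps hs m l t\<bar> \<le> m^k * (1 + 2*real k*c)" unfolding t by (rule even_odd_bounds(1)[OF l])
  also have "\<dots> = q^t * (1 + real t * c)" unfolding t mq by (simp add: power_mult)
  also have "\<dots> \<le> q^t * (1 + real t)" using c01 q by (intro mult_left_mono) (auto simp: mult_left_le)
  also have "\<dots> \<le> KK * (real t + 1) * q^t"
  proof -
    have "1 + real t \<le> KK * (real t + 1)"
      using mult_right_mono[OF KK_ge1, of "real t + 1"] by (simp add: add.commute)
    hence "q^t * (1 + real t) \<le> q^t * (KK * (real t + 1))" using q by (intro mult_left_mono) auto
    thus ?thesis by (simp add: ac_simps)
  qed
  finally show ?thesis .
next
  case False
  then obtain k where t: "t = 2*k+1" using oddE by blast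
  have "\<bar>ps hs m l t\<bar> \<le> m^k * ((real k + 1) * Cst)" unfolding t by (rule even_odd_bounds(2)[OF l])
  also have "\<dots> = q^t * ((real k + 1) * (Cst / q))" unfolding t mq using q by (simp add: power_mult)
  also have "\<dots> \<le> q^t * ((real t + 1) * KK)"
  proof (rule mult_left_mono)
    show "(real k + 1) * (Cst / q) \<le> (real t + 1) * KK"
      by (rule mult_mono, insert t Cst_nonneg q, auto simp: KK_def)
  qed (use q in simp)
  finally show ?thesis by (simp add: ac_simps)
qed

definition Sset where "Sset t = {vnorm (hb hs m (quad_grad H xs) x0 t - xs) / vnorm (x0 - xs) | d H xs x0.
       in_class Lam d H xs \<and> x0 \<in> carrier_vec d \<and> x0 \<noteq> xs}"

lemma wr_Sset: "worst_rate Lam hs m t = Sup (Sset t)" unfolding worst_rate_def Sset_def ..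

lemma vnorm_pos: assumes "x \<in> carrier_vec d" "x \<noteq> 0\<^sub>v d" shows "vnorm x > 0"
  unfolding vnorm_def using real_self_sprod_pos[OF assms] by simp

lemma Sset_bound: assumes M: "\<And>l. l \<in> Lam \<Longrightarrow> \<bar>ps hs m l t\<bar> \<le> M" and M0: "M \<ge> 0"
  and y: "y \<in> Sset t" shows "y \<le> M"
proof -
  from y obtain d H xs x0 where y: "y = vnorm (hb hs m (quad_grad H xs) x0 t - xs) / vnorm (x0 - xs)"
    and cls: "in_class Lam d H xs" and x0: "x0 \<in> carrier_vec d" and ne: "x0 \<noteq> xs"
    unfolding Sset_def by auto
  have xs: "xs \<in> carrier_vec d" using cls unfolding in_class_def by auto
  have "x0 - xs \<noteq> 0\<^sub>v d"
  proof
    assume h: "x0 - xs = 0\<^sub>v d"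
    have "x0 = xs"
    proof (rule eq_vecI)
      fix i assume "i < dim_vec xs"
      thus "x0 $ i = xs $ i" using arg_cong[OF h, of "\<lambda>v. v$i"] x0 xs by auto
    qed (use x0 xs in auto)
    thus False using ne by simp
  qed
  hence p: "vnorm (x0 - xs) > 0" by (intro vnorm_pos, use x0 xs in auto)
  have "vnorm (hb hs m (quad_grad H xs) x0 t - xs) \<le> M * vnorm (x0 - xs)"
    by (rule norm_bound[OF cls x0 M M0])
  thus ?thesis unfolding y using p by (simp add: divide_le_eq)
qed

lemma Sset_mem: "\<bar>ps hs m mu1 t\<bar> \<in> Sset t"
proof -
  define H :: "real mat" where "H = mat 1 1 (\<lambda>_. mu1)"
  define xs :: "real vec" where "xs = 0\<^sub>v 1"
  define x0 :: "real vec" where "x0 = unit_vec 1 0"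
  have H: "H \<in> carrier_mat 1 1" unfolding H_def by auto
  have xs: "xs \<in> carrier_vec 1" unfolding xs_def by auto
  have x0: "x0 \<in> carrier_vec 1" unfolding x0_def by auto
  have Hx0: "H *\<^sub>v x0 = mu1 \<cdot>\<^sub>v x0" unfolding H_def x0_def
    by (intro eq_vecI, auto simp: scalar_prod_def)
  have sym: "H\<^sup>T = H" unfolding H_def by (intro eq_matI, auto)
  have "l \<in> Lam" if ev: "eigenvalue H l" for l
  proof -
    from ev obtain v where v: "v \<in> carrier_vec 1" "v \<noteq> 0\<^sub>v 1" "H *\<^sub>v v = l \<cdot>\<^sub>v v"
      unfolding eigenvalue_def eigenvector_def using H by auto
    have "v $ 0 \<noteq> 0"
    proof
      assume "v $ 0 = 0"
      hence "v = 0\<^sub>v 1" using v(1) by (intro eq_vecI, auto)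
      thus False using v(2) by simp
    qed
    moreover have "(H *\<^sub>v v) $ 0 = mu1 * v $ 0" unfolding H_def using v(1) by (auto simp: scalar_prod_def)
    ultimately have "l = mu1" using v(3) v(1) by auto
    thus ?thesis unfolding Lam_def using a by auto
  qed
  hence cls: "in_class Lam 1 H xs" unfolding in_class_def using H xs sym by auto
  have ne: "x0 \<noteq> xs"
  proof
    assume "x0 = xs"
    hence "x0 $ 0 = xs $ 0" by simp
    thus False unfolding x0_def xs_def by simp
  qed
  let ?e = "hb hs m (quad_grad H xs) x0 t - xs"
  have ec: "?e \<in> carrier_vec 1" using hb_carrier[OF H xs x0] xs by auto
  have "x0 \<bullet> ?e = ps hs m mu1 t * (x0 \<bullet> (x0 - xs))" by (rule hb_eig[OF H sym xs x0 x0 Hx0])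
  moreover have "x0 \<bullet> ?e = ?e $ 0" using scalar_prod_left_unit[OF ec, of 0] unfolding x0_def by simp
  moreover have "x0 \<bullet> (x0 - xs) = 1" unfolding x0_def xs_def by (simp add: scalar_prod_def)
  ultimately have e0: "?e $ 0 = ps hs m mu1 t" by simp
  have "?e \<bullet> ?e = ?e $ 0 * ?e $ 0" using ec xs by (simp add: scalar_prod_def)
  hence "vnorm ?e = \<bar>?e $ 0\<bar>" unfolding vnorm_def by simp
  moreover have "vnorm (x0 - xs) = 1" unfolding vnorm_def x0_def xs_def by (simp add: scalar_prod_def)
  ultimately have r: "vnorm ?e / vnorm (x0 - xs) = \<bar>ps hs m mu1 t\<bar>" using e0 by simp
  show ?thesis unfolding Sset_def mem_Collect_eq
    by (rule exI[of _ 1], rule exI[of _ H], rule exI[of _ xs], rule exI[of _ x0], use r cls x0 ne in auto)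
qed

lemma wr_facts:
  shows "0 \<le> worst_rate Lam hs m t" "worst_rate Lam hs m t \<le> KK * (real t + 1) * q^t"
    "even t \<Longrightarrow> worst_rate Lam hs m t = q^t * (1 + real t * c)"
proof -
  have M0: "KK * (real t + 1) * q^t \<ge> 0" using KK_ge1 q by simp
  have bdd: "bdd_above (Sset t)"
    using Sset_bound[OF total_bound M0] by (auto simp: bdd_above_def)
  have ne: "Sset t \<noteq> {}" using Sset_mem by auto
  have "\<bar>ps hs m mu1 t\<bar> \<le> Sup (Sset t)" by (rule cSup_upper[OF Sset_mem bdd])
  thus "0 \<le> worst_rate Lam hs m t" unfolding wr_Sset by linarith
  show "worst_rate Lam hs m t \<le> KK * (real t + 1) * q^t" unfolding wr_Sset
    by (rule cSup_least[OF ne], rule Sset_bound[OF total_bound M0])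
  assume "even t"
  then obtain k where t: "t = 2*k" by auto
  have mu1: "mu1 \<in> Lam" unfolding Lam_def using a by auto
  have "ps hs m mu1 (2*k) = m^k * (1 + 2*real k*c)" by (rule even_odd_bounds(3)[OF mu1 refl])
  hence ex: "ps hs m mu1 t = q^t * (1 + real t * c)" unfolding t mq by (simp add: power_mult)
  have nn: "q^t * (1 + real t * c) \<ge> 0" using q c01 by simp
  have "Sup (Sset t) \<le> q^t * (1 + real t * c)"
  proof (rule cSup_least[OF ne])
    fix y assume y: "y \<in> Sset t"
    show "y \<le> q^t * (1 + real t * c)"
    proof (rule Sset_bound[OF _ nn y])
      fix l assume l: "l \<in> Lam"
      show "\<bar>ps hs m l t\<bar> \<le> q^t * (1 + real t * c)"
        using even_odd_bounds(1)[OF l, of k] unfolding t mq by (simp add: power_mult)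
    qed
  qed
  moreover have "q^t * (1 + real t * c) \<le> Sup (Sset t)"
    using cSup_upper[OF Sset_mem bdd] ex nn by simp
  ultimately show "worst_rate Lam hs m t = q^t * (1 + real t * c)" unfolding wr_Sset by simp
qed


lemma root_pow_q: "0 < t \<Longrightarrow> (q^t) powr (1 / real t) = q"
  using q by (simp add: root_powr_inverse[symmetric] real_root_power_cancel)

lemma asym: "asym_rate Lam hs m = ereal q"
proof -
  define r where "r t = worst_rate Lam hs m t" for t
  define X where "X t = r t powr (1 / real t)" for t
  have AR: "asym_rate Lam hs m = limsup (\<lambda>t. ereal (X t))" unfolding asym_rate_def X_def r_def ..
  define Z where "Z t = root t (KK * (real t + 1))" for t
  have Z: "Z \<longlonglongrightarrow> 1"
  proof (rule tendsto_sandwich[of "\<lambda>_. 1" Z sequentially "\<lambda>t. root t (2*KK) * root t (real t)"])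
    show "\<forall>\<^sub>F t in sequentially. 1 \<le> Z t"
      using eventually_gt_at_top[of 0]
    proof (rule eventually_mono)
      fix t :: nat assume t: "0 < t"
      have "1 \<le> KK * (real t + 1)" using KK_ge1 mult_mono[OF KK_ge1, of 1 "real t + 1"] by simp
      thus "1 \<le> Z t" unfolding Z_def using t by simp
    qed
    show "\<forall>\<^sub>F t in sequentially. Z t \<le> root t (2*KK) * root t (real t)"
      using eventually_gt_at_top[of 0]
    proof (rule eventually_mono)
      fix t :: nat assume t: "0 < t"
      have "KK * (real t + 1) \<le> (2*KK) * real t" using t KK_ge1 by (simp add: algebra_simps)
      hence "Z t \<le> root t ((2*KK) * real t)" unfolding Z_def using t by (simp add: real_root_le_mono)
      thus "Z t \<le> root t (2*KK) * root t (real t)" by (simp add: real_root_mult)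
    qed
    have "(\<lambda>t. root t (2*KK) * root t (real t)) \<longlonglongrightarrow> 1 * 1"
      by (intro tendsto_mult LIMSEQ_root_const LIMSEQ_root, use KK_ge1 in simp)
    thus "(\<lambda>t. root t (2*KK) * root t (real t)) \<longlonglongrightarrow> 1" by simp
  qed simp
  define Y where "Y t = Z t * q" for t
  have Y: "Y \<longlonglongrightarrow> q" unfolding Y_def using tendsto_mult[OF Z tendsto_const[of q]] by simp
  have XY: "\<forall>\<^sub>F t in sequentially. ereal (X t) \<le> ereal (Y t)"
    using eventually_gt_at_top[of 0]
  proof (rule eventually_mono)
    fix t :: nat assume t: "0 < t"
    have "X t \<le> (KK * (real t + 1) * q^t) powr (1 / real t)" unfolding X_def r_def
      by (rule powr_mono2, use wr_facts(1,2) in auto)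
    also have "\<dots> = root t (KK * (real t + 1) * q^t)"
      using t KK_ge1 q by (subst root_powr_inverse) auto
    also have "\<dots> = Y t" unfolding Y_def Z_def real_root_mult using q t
      by (simp add: real_root_power_cancel)
    finally show "ereal (X t) \<le> ereal (Y t)" by simp
  qed
  have up: "limsup (\<lambda>t. ereal (X t)) \<le> ereal q"
  proof -
    have "limsup (\<lambda>t. ereal (X t)) \<le> limsup (\<lambda>t. ereal (Y t))" by (rule Limsup_mono[OF XY])
    also have "limsup (\<lambda>t. ereal (Y t)) = ereal q"
      by (rule lim_imp_Limsup, simp, rule tendsto_ereal[OF Y])
    finally show ?thesis .
  qed
  define rr :: "nat \<Rightarrow> nat" where "rr k = 2*k+2" for k
  have sm: "strict_mono rr" unfolding rr_def by (rule strict_monoI) simp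
  have low1: "q \<le> X (rr k)" for k
  proof -
    have ev: "even (rr k)" unfolding rr_def by simp
    have t: "0 < rr k" unfolding rr_def by simp
    have "q^(rr k) \<le> r (rr k)" unfolding r_def wr_facts(3)[OF ev] using q c01
      by (simp add: mult_le_cancel_left1)
    hence "(q^(rr k)) powr (1 / real (rr k)) \<le> X (rr k)" unfolding X_def
      by (intro powr_mono2) (use q in auto)
    thus ?thesis using root_pow_q[OF t] by simp
  qed
  have low: "ereal q \<le> limsup (\<lambda>t. ereal (X t))"
  proof -
    have "ereal q \<le> limsup ((\<lambda>t. ereal (X t)) \<circ> rr)"
      by (rule le_Limsup, simp, rule always_eventually, use low1 in simp)
    also have "\<dots> \<le> limsup (\<lambda>t. ereal (X t))" by (rule limsup_subseq_mono[OF sm])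
    finally show ?thesis .
  qed
  show ?thesis unfolding AR using up low by simp
qed

end

theorem corollary1:
  fixes mu1 L1 mu2 L2 :: real
  assumes "0 < mu1" "mu1 < L1" "L1 \<le> mu2" "mu2 < L2" "L1 - mu1 = L2 - mu2"
  defines "Lam \<equiv> {mu1..L1} \<union> {mu2..L2}"
      and "rho \<equiv> (L2 + mu1) / (L2 - mu1)"
      and "R \<equiv> (mu2 - L1) / (L2 - mu1)"
  defines "q \<equiv> (sqrt (rho^2 - R^2) - sqrt (rho^2 - 1)) / sqrt (1 - R^2)"
  defines "m \<equiv> q^2"
  defines "h0 \<equiv> (1 + m) / L1" and "h1 \<equiv> (1 + m) / mu2"
  shows "(\<forall>t. even t \<longrightarrow>
            worst_rate Lam [h0, h1] m t = q ^ t * (1 + real t * sqrt ((rho^2 - 1) / (rho^2 - R^2))))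
       \<and> (\<forall>t. even t \<longrightarrow>
            worst_rate Lam [h1, h0] m t = q ^ t * (1 + real t * sqrt ((rho^2 - 1) / (rho^2 - R^2))))
       \<and> asym_rate Lam [h0, h1] m = ereal q
       \<and> asym_rate Lam [h1, h0] m = ereal q"
proof -
  note K = key_alg[OF assms(1-5)]
  have A: "0 < q" "q < 1" "(1+m)^2 * ((L1-mu1)*(mu2-mu1)) = 4*m*(L1*mu2)"
      "sqrt ((rho^2 - 1) / (rho^2 - R^2)) = (1-m)/(1+m)"
    using K unfolding m_def q_def rho_def R_def by auto
  interpret I1: hbset mu1 L1 mu2 L2 m q "(1-m)/(1+m)" "[h0, h1]"
    by (unfold_locales) (use assms(1-5) A in \<open>auto simp: m_def h0_def h1_def\<close>)
  interpret I2: hbset mu1 L1 mu2 L2 m q "(1-m)/(1+m)" "[h1, h0]"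
    by (unfold_locales) (use assms(1-5) A in \<open>auto simp: m_def h0_def h1_def\<close>)
  have L1: "I1.Lam = Lam" and L2: "I2.Lam = Lam" unfolding I1.Lam_def I2.Lam_def Lam_def by auto
  show ?thesis unfolding A(4) using I1.wr_facts(3) I2.wr_facts(3) I1.asym I2.asym unfolding L1 L2 by auto
qed


end
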